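(* Assume the setting described in the context, and let $i\in\{1,\dots,t\}$. Let $\mathbf p\in\mathcal C^*$ be divisible by none of $\pi_1,\dots,\pi_{i-1}$. Then there exist a unique $j\in\mathbb N$ and a unique $\mathbf q\in\mathcal C^*$ divisible by none of $\pi_1,\dots,\pi_i$ such that $\mathbf p=j\pi_i+\mathbf q$ (in transvectant terms: $\mathbb T(\mathbf p)\equiv\vartheta_i^j\,\mathbb T(\mathbf q)$).
   Context: $\mathbb N=\{0,1,2,\dots\}$. For a real square matrix $A_0$ put $\mathcal D_{A_0}f(\mathbf x)=f'(\mathbf x)A_0\mathbf x$. Let $(\acute X,\acute Y,\acute Z),(\grave X,\grave Y,\grave Z)$ be $\mathfrak{sl}_2$ triads ($[X,Y]=Z,[Z,X]=2X,[Z,Y]=-2Y$) of real $n\times n$ resp. $m\times m$ matrices; $\acute{\mathcal X}=\mathcal D_{\acute Y},\acute{\mathcal Y}=\mathcal D_{\acute X},\acute{\mathcal Z}=\mathcal D_{\acute Z}$ on $\mathbb R[[\mathbf x]]$, similarly on $\mathbb R[[\mathbf y]]$; $\acute{\mathcal J}=\ker\acute{\mathcal X}$, $\grave{\mathcal J}=\ker\grave{\mathcal X}$. Hilbert bases $\alpha=(\alpha_1,\dots,\alpha_p)$ of $\acute{\mathcal J}$ and $\beta=(\beta_1,\dots,\beta_q)$ of $\grave{\mathcal J}$ consist of homogeneous weight invariants (eigenvectors of $\acute{\mathcal Z}$ resp. $\grave{\mathcal Z}$ with weights $\widehat\alpha_i,\widehat\beta_j$) whose monomials span by countable linear combinations;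 $\widehat\alpha\mathbf k=\sum\widehat\alpha_ik_i$, $\widehat\beta\boldsymbol\ell=\sum\widehat\beta_j\ell_j$. $\acute A\subset\mathbb N^p,\grave A\subset\mathbb N^q$ are standard preferred sets (monomials $\alpha^{\mathbf k}$, $\mathbf k\in\acute A$, pairwise distinct, linearly independent, spanning $\acute{\mathcal J}$ by countable combinations; $\acute A$ closed under componentwise-smaller vectors; same for $\grave A$). $\mathcal C=\{(\mathbf k;\boldsymbol\ell;s)\in\mathbb N^{p+q+1}:s\le\widehat\alpha\mathbf k,s\le\widehat\beta\boldsymbol\ell\}$ (the element $(\mathbf k;\boldsymbol\ell;s)$ represents the transvectant $\mathbb T(\mathbf k;\boldsymbol\ell;s)=(\alpha^{\mathbf k},\beta^{\boldsymbol\ell})^{(s)}$, defined by $(f,g)^{(s)}=\sum_{j=0}^s(-1)^j\binom sj\frac{(\widehat f-j)!}{(\widehat f-s)!}\frac{(\widehat g-s+j)!}{(\widehat g-s)!}(\acute{\mathcal Y}^jf)(\grave{\mathcal Y}^{s-j}g)$), $\mathcal C^*=\{(\mathbf k;\boldsymbol\ell;s)\in\mathcal C:\mathbf k\in\acute A,\boldsymbol\ell\in\grave A\}$. For $\mathbf p,\mathbf r\in\mathcal C$, $\mathbf p$ is divisible by $\mathbf r$ if $\mathbf p-\mathbf r\in\mathcal C$. A prime is a nonzero element of $\mathcal C$ that is not a sum of two nonzero elements of $\mathcal C$; $\pi_1,\dots,\pi_t$ are the primes lying in $\mathcal C^*$, listed in a fixed order, and $\vartheta_i=\mathbb T(\pi_i)$.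 Equivalence $\equiv$ of a transvectant monomial $\prod\mathbb T(\mathbf p_r)^{m_r}$ with $\mathbb T(\mathbf p)$ means $\mathbf p=\sum m_r\mathbf p_r$. *)

theory Defs
  imports Main
begin

text \<open>Elements of N^(p+q+1) are represented as triples (k, l, s) with
  k a list of length p, l a list of length q and s a natural number.\<close>

type_synonym cvec = "nat list \<times> nat list \<times> nat"

definition wsum :: "nat list \<Rightarrow> nat list \<Rightarrow> nat" where
  "wsum w k = (\<Sum>i<length w. w ! i * k ! i)"

definition Ccone :: "nat list \<Rightarrow> nat list \<Rightarrow> cvec set" where
  "Ccone wa wb = {(k, l, s). length k = length wa \<and> length l = length wb \<and>
                    s \<le> wsum wa k \<and> s \<le> wsum wb l}"

definition Cstar :: "nat list \<Rightarrow> nat list \<Rightarrow> nat list set \<Rightarrow> nat list set \<Rightarrow> cvec set" where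
  "Cstar wa wb A B = {(k, l, s). (k, l, s) \<in> Ccone wa wb \<and> k \<in> A \<and> l \<in> B}"

definition cadd :: "cvec \<Rightarrow> cvec \<Rightarrow> cvec" where
  "cadd x y = (case x of (k, l, s) \<Rightarrow> case y of (k', l', s') \<Rightarrow>
      (map2 (+) k k', map2 (+) l l', s + s'))"

definition cscale :: "nat \<Rightarrow> cvec \<Rightarrow> cvec" where
  "cscale j x = (case x of (k, l, s) \<Rightarrow> (map ((*) j) k, map ((*) j) l, j * s))"

definition czero :: "nat list \<Rightarrow> nat list \<Rightarrow> cvec" where
  "czero wa wb = (replicate (length wa) 0, replicate (length wb) 0, 0)"

definition cdivisible :: "nat list \<Rightarrow> nat list \<Rightarrow> cvec \<Rightarrow> cvec \<Rightarrow> bool" where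
  "cdivisible wa wb x r \<longleftrightarrow> (\<exists>d \<in> Ccone wa wb. x = cadd r d)"

definition cprime :: "nat list \<Rightarrow> nat list \<Rightarrow> cvec \<Rightarrow> bool" where
  "cprime wa wb x \<longleftrightarrow> x \<in> Ccone wa wb \<and> x \<noteq> czero wa wb \<and>
     \<not> (\<exists>y \<in> Ccone wa wb. \<exists>z \<in> Ccone wa wb.
          y \<noteq> czero wa wb \<and> z \<noteq> czero wa wb \<and> x = cadd y z)"

text \<open>Combinatorial part of "standard preferred set": a set of exponent
  vectors of length n closed under componentwise-smaller vectors.\<close>
definition down_closed :: "nat \<Rightarrow> nat list set \<Rightarrow> bool" where
  "down_closed n A \<longleftrightarrow> (\<forall>k \<in> A. length k = n) \<and>
     (\<forall>k \<in> A. \<forall>k'. length k' = length k \<and> (\<forall>i < length k. k' ! i \<le> k ! i) \<longrightarrow> k' \<in> A)"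

end

theory Submission
  imports Defs
begin

lemma m2_assoc: "map2 (+) (map2 (+) a b) c = map2 (+) a (map2 (+) (b::nat list) c)"
proof (induction a arbitrary: b c)
  case Nil then show ?case by simp
next
  case (Cons x a) then show ?case by (cases b; cases c) auto
qed

lemma m2_comm: "map2 (+) a b = map2 (+) b (a::nat list)"
proof (induction a arbitrary: b)
  case Nil then show ?case by simp
next
  case (Cons x a) then show ?case by (cases b) auto
qed

lemma m2_scale: "map2 (+) (map ((*) a) k) (map ((*) b) k) = map ((*) (a+b)) (k::nat list)"
  by (induction k) (auto simp: algebra_simps)

lemma m2_zero: "length k = length k' \<Longrightarrow> map2 (+) (map ((*) 0) k) k' = (k'::nat list)"
  by (induction k k' rule: list_induct2) auto

lemma m2_cancel: "length k = length b \<Longrightarrow> length k = length c \<Longrightarrow>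
   map2 (+) k b = map2 (+) k c \<Longrightarrow> b = (c::nat list)"
proof (induction k arbitrary: b c)
  case Nil then show ?case by simp
next
  case (Cons x k)
  from Cons.prems(1,2) obtain y b' z c' where bc: "b = y#b'" "c = z#c'"
    by (cases b; cases c) auto
  show ?case using Cons.prems Cons.IH[of b' c'] unfolding bc by simp
qed

lemma m2_sum: "length k = length k' \<Longrightarrow> sum_list (map2 (+) k k') = sum_list k + sum_list (k'::nat list)"
  by (induction k k' rule: list_induct2) auto

lemma dc_sub: "down_closed n A \<Longrightarrow> map2 (+) k k' \<in> A \<Longrightarrow> length k = length k' \<Longrightarrow> k' \<in> A"
proof -
  assume a: "down_closed n A" "map2 (+) k k' \<in> A" "length k = length k'"
  then have "\<forall>k\<in>A. \<forall>k'. length k' = length k \<and> (\<forall>i<length k. k' ! i \<le> k ! i) \<longrightarrow> k' \<in> A"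
    unfolding down_closed_def by blast
  from this[rule_format, OF a(2), of k'] a(3) show "k' \<in> A" by (simp add: trans_le_add2)
qed

lemma wsum_add: "length k = length w \<Longrightarrow> length k' = length w \<Longrightarrow>
   wsum w (map2 (+) k k') = wsum w k + wsum w k'"
  unfolding wsum_def by (simp add: algebra_simps sum.distrib)

lemma wsum_scale: "length k = length w \<Longrightarrow> wsum w (map ((*) j) k) = j * wsum w k"
  unfolding wsum_def by (simp add: algebra_simps sum_distrib_left)

lemma cadd_assoc: "cadd (cadd a b) c = cadd a (cadd b c)"
  by (cases a; cases b; cases c) (simp add: cadd_def m2_assoc)

lemma cadd_comm: "cadd a b = cadd b a"
  by (cases a; cases b) (simp add: cadd_def m2_comm[of _ "_::nat list"] add.commute)

lemma cscale_add: "cscale (a+b) p = cadd (cscale a p) (cscale b p)"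
  by (cases p) (simp add: cadd_def cscale_def m2_scale algebra_simps)

lemma cscale_Suc: "cscale (Suc j) p = cadd p (cscale j p)"
proof -
  have "cscale (Suc j) p = cscale (1 + j) p" by simp
  also have "\<dots> = cadd (cscale 1 p) (cscale j p)" by (rule cscale_add)
  also have "cscale 1 p = p" by (cases p) (simp add: cscale_def map_idI)
  finally show ?thesis .
qed

lemma cadd_zero: "p \<in> Ccone wa wb \<Longrightarrow> x \<in> Ccone wa wb \<Longrightarrow> cadd (cscale 0 p) x = x"
  by (cases p; cases x) (simp add: cadd_def cscale_def Ccone_def m2_zero del: mult_0)

lemma Ccone_add: "a \<in> Ccone wa wb \<Longrightarrow> b \<in> Ccone wa wb \<Longrightarrow> cadd a b \<in> Ccone wa wb"
  by (cases a; cases b) (auto simp: cadd_def Ccone_def wsum_add intro: add_mono)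

lemma Ccone_scale: "a \<in> Ccone wa wb \<Longrightarrow> cscale j a \<in> Ccone wa wb"
  by (cases a) (auto simp: cscale_def Ccone_def wsum_scale)

lemma cancel: "a \<in> Ccone wa wb \<Longrightarrow> b \<in> Ccone wa wb \<Longrightarrow> c \<in> Ccone wa wb \<Longrightarrow>
   cadd a b = cadd a c \<Longrightarrow> b = c"
  apply (cases a; cases b; cases c)
  apply (clarsimp simp: cadd_def Ccone_def)
  apply (intro conjI)
   apply (rule m2_cancel; assumption?; simp)
  apply (rule m2_cancel; assumption?; simp)
  done

fun msr :: "cvec \<Rightarrow> nat" where "msr (k, l, s) = sum_list k + sum_list l + s"

lemma msr_add: "a \<in> Ccone wa wb \<Longrightarrow> b \<in> Ccone wa wb \<Longrightarrow> msr (cadd a b) = msr a + msr b"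
  by (cases a; cases b) (auto simp: cadd_def Ccone_def m2_sum)

lemma msr_pos: "a \<in> Ccone wa wb \<Longrightarrow> a \<noteq> czero wa wb \<Longrightarrow> msr a > 0"
proof (cases a)
  case (fields k l s)
  assume a: "a \<in> Ccone wa wb" "a \<noteq> czero wa wb"
  show ?thesis
  proof (rule ccontr)
    assume "\<not> 0 < msr a"
    then have "sum_list k = 0" "sum_list l = 0" "s = 0" using fields by auto
    then have "\<forall>x\<in>set k. x = 0" "\<forall>x\<in>set l. x = 0" by auto
    then have "k = replicate (length k) 0" "l = replicate (length l) 0"
      by (auto intro: replicate_length_same[symmetric])
    then show False using a fields \<open>s = 0\<close> by (auto simp: czero_def Ccone_def)
  qed
qed

lemma Cstar_sub: "down_closed (length wa) A \<Longrightarrow> down_closed (length wb) B \<Longrightarrow>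
  cadd p d \<in> Cstar wa wb A B \<Longrightarrow> p \<in> Ccone wa wb \<Longrightarrow> d \<in> Ccone wa wb \<Longrightarrow> d \<in> Cstar wa wb A B"
  apply (cases p; cases d)
  apply (clarsimp simp: Cstar_def Ccone_def cadd_def)
  apply (auto elim: dc_sub)
  done

lemma uniq_aux:
  assumes p: "p \<in> Ccone wa wb" and q: "q \<in> Ccone wa wb" and q': "q' \<in> Ccone wa wb"
    and eq: "cadd (cscale j p) q = cadd (cscale j' p) q'"
    and nd: "\<not> cdivisible wa wb q' p"
  shows "j \<le> j'"
proof (rule ccontr)
  assume "\<not> j \<le> j'"
  then obtain m where m: "j = j' + Suc m" by (metis add_Suc_right less_imp_Suc_add not_le)
  have "cadd (cscale j' p) q' = cadd (cscale j' p) (cadd (cscale (Suc m) p) q)"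
    using eq cscale_add[of j' "Suc m" p] cadd_assoc[of "cscale j' p"] by (simp add: m)
  then have "q' = cadd (cscale (Suc m) p) q"
    using cancel[OF Ccone_scale[OF p] q' Ccone_add[OF Ccone_scale[OF p] q]] by metis
  also have "\<dots> = cadd p (cadd (cscale m p) q)" by (simp add: cscale_Suc cadd_assoc)
  finally have "cdivisible wa wb q' p" unfolding cdivisible_def
    using Ccone_add Ccone_scale p q by blast
  with nd show False by simp
qed

lemma exist_aux:
  assumes dA: "down_closed (length wa) A" and dB: "down_closed (length wb) B"
    and p: "p \<in> Ccone wa wb" "p \<noteq> czero wa wb"
  shows "y \<in> Cstar wa wb A B \<Longrightarrow> (\<forall>\<pi> \<in> set P. \<not> cdivisible wa wb y \<pi>) \<Longrightarrow>
     \<exists>j q. q \<in> Cstar wa wb A B \<and> (\<forall>\<pi> \<in> set (P @ [p]). \<not> cdivisible wa wb q \<pi>)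
            \<and> y = cadd (cscale j p) q"
proof (induction "msr y" arbitrary: y rule: less_induct)
  case less
  have yC: "y \<in> Ccone wa wb" using less.prems(1) unfolding Cstar_def by auto
  show ?case
  proof (cases "cdivisible wa wb y p")
    case False
    then show ?thesis using less.prems cadd_zero[OF p(1) yC]
      by (intro exI[of _ 0] exI[of _ y]) auto
  next
    case True
    then obtain d where d: "d \<in> Ccone wa wb" "y = cadd p d" unfolding cdivisible_def by blast
    have dS: "d \<in> Cstar wa wb A B" using Cstar_sub[OF dA dB] less.prems(1) d p by blast
    have nd: "\<forall>\<pi> \<in> set P. \<not> cdivisible wa wb d \<pi>"
    proof (intro ballI notI)
      fix \<pi> assume pi: "\<pi> \<in> set P" "cdivisible wa wb d \<pi>"
      then obtain e where e: "e \<in> Ccone wa wb" "d = cadd \<pi> e" unfolding cdivisible_def by blast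
      have "y = cadd \<pi> (cadd p e)" using d e by (metis cadd_assoc cadd_comm)
      then have "cdivisible wa wb y \<pi>" unfolding cdivisible_def using Ccone_add[OF p(1) e(1)] by blast
      with less.prems(2) pi show False by blast
    qed
    have "msr y = msr p + msr d" using d msr_add[OF p(1) d(1)] by simp
    moreover have "msr p > 0" using msr_pos p by blast
    ultimately have "msr d < msr y" by simp
    from less.hyps[OF this dS nd] obtain j q where
      jq: "q \<in> Cstar wa wb A B" "\<forall>\<pi> \<in> set (P @ [p]). \<not> cdivisible wa wb q \<pi>" "d = cadd (cscale j p) q"
      by blast
    have "y = cadd (cscale (Suc j) p) q" using d jq by (simp add: cscale_Suc cadd_assoc)
    with jq show ?thesis by blast
  qed
qed

theorem lemma15p2:
  fixes wa wb :: "nat list" and A B :: "nat list set"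
    and pis :: "cvec list" and i :: nat and x :: cvec
  assumes "down_closed (length wa) A" and "down_closed (length wb) B"
    and "distinct pis"
    and "set pis = {\<pi> \<in> Cstar wa wb A B. cprime wa wb \<pi>}"
    and "i < length pis"
    and "x \<in> Cstar wa wb A B"
    and "\<forall>\<pi> \<in> set (take i pis). \<not> cdivisible wa wb x \<pi>"
  shows "\<exists>!(j, q). q \<in> Cstar wa wb A B
            \<and> (\<forall>\<pi> \<in> set (take (Suc i) pis). \<not> cdivisible wa wb q \<pi>)
            \<and> x = cadd (cscale j (pis ! i)) q"
proof -
  let ?p = "pis ! i"
  have "?p \<in> set pis" using assms(5) by simp
  then have pS: "?p \<in> Cstar wa wb A B" and pr: "cprime wa wb ?p" using assms(4) by auto
  have pC: "?p \<in> Ccone wa wb" "?p \<noteq> czero wa wb" using pr unfolding cprime_def by auto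
  have tk: "take (Suc i) pis = take i pis @ [?p]" using assms(5) by (simp add: take_Suc_conv_app_nth)
  obtain j q where E: "q \<in> Cstar wa wb A B" "\<forall>\<pi> \<in> set (take (Suc i) pis). \<not> cdivisible wa wb q \<pi>"
      "x = cadd (cscale j ?p) q"
    using exist_aux[OF assms(1,2) pC assms(6,7)] unfolding tk by blast
  show ?thesis
  proof (rule ex1I[of _ "(j, q)"])
    show "case (j, q) of (j, q) \<Rightarrow> q \<in> Cstar wa wb A B
            \<and> (\<forall>\<pi> \<in> set (take (Suc i) pis). \<not> cdivisible wa wb q \<pi>)
            \<and> x = cadd (cscale j (pis ! i)) q" using E by simp
  next
    fix y assume Y: "case y of (j, q) \<Rightarrow> q \<in> Cstar wa wb A B
            \<and> (\<forall>\<pi> \<in> set (take (Suc i) pis). \<not> cdivisible wa wb q \<pi>)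
            \<and> x = cadd (cscale j (pis ! i)) q"
    obtain j' q' where y: "y = (j', q')" by (cases y)
    have E': "q' \<in> Cstar wa wb A B" "\<forall>\<pi> \<in> set (take (Suc i) pis). \<not> cdivisible wa wb q' \<pi>"
      "x = cadd (cscale j' ?p) q'" using Y y by auto
    have qC: "q \<in> Ccone wa wb" "q' \<in> Ccone wa wb" using E(1) E'(1) by (auto simp: Cstar_def)
    have pin: "?p \<in> set (take (Suc i) pis)" unfolding tk by simp
    have "j \<le> j'" using uniq_aux[OF pC(1) qC(1) qC(2), of j j'] E(3) E'(3) E'(2) pin by auto
    moreover have "j' \<le> j" using uniq_aux[OF pC(1) qC(2) qC(1), of j' j] E(3) E'(3) E(2) pin by auto
    ultimately have jj: "j = j'" by simp
    have "q' = q" using cancel[OF Ccone_scale[OF pC(1)] qC(2) qC(1), of j'] E(3) E'(3) unfolding jj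
      by metis
    then show "y = (j, q)" using y jj by simp
  qed
qed

end
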